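(* Let $f:\mathcal{X}\to\Delta^{k-1}$ be a classifier outputting confidence vectors, let $x^{(1)},\dots,x^{(n)}\in\mathcal{X}$, let $f_\# P(c)=\frac1n\sum_{i=1}^n\delta_{f(x^{(i)})}$, and let $P_{\mathrm{pseudo}}(y)=\frac1n\sum_{i=1}^n\delta_{y^{(i)}}$ where $y^{(i)}$ is the one-hot vector with $y^{(i)}_j=\mathbb{1}[j=\arg\max_{j'}f_{j'}(x^{(i)})]$. Then for every probability distribution $P'(y)$ supported on the set of one-hot vectors $\{0,1\}^k\cap\Delta^{k-1}$, $$W_\infty\bigl(f_\# P(c),P'(y)\bigr)\ \ge\ W_\infty\bigl(f_\# P(c),P_{\mathrm{pseudo}}(y)\bigr).$$
   Context: $\Delta^{k-1}=\{c\in\mathbb{R}^k: c_j\ge 0,\ \sum_j c_j=1\}$. For probability distributions $P,Q$ on $\mathbb{R}^k$, $W_\infty(P,Q)=\inf_{\pi\in\Pi(P,Q)}\int\|u-v\|_\infty\,d\pi(u,v)$ over couplings $\pi$ of $P$ and $Q$ (optimal transport distance with ground cost $\|u-v\|_\infty$). Ties in $\arg\max$ are broken by a fixed rule (e.g. smallest index). *)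

theory Defs
  imports "HOL-Probability.Probability"
begin

definition prob_simplex :: "(real ^ 'k::finite) set" where
  "prob_simplex = {c. (\<forall>j. c $ j \<ge> 0) \<and> (\<Sum>j\<in>UNIV. c $ j) = 1}"

definition onehots :: "(real ^ 'k::finite) set" where
  "onehots = {y. (\<forall>j. y $ j \<in> {0, 1})} \<inter> prob_simplex"

definition onehot :: "'k::finite \<Rightarrow> real ^ 'k" where
  "onehot j = (\<chi> j'. if j' = j then 1 else 0)"

definition linf_dist :: "real ^ 'k::finite \<Rightarrow> real ^ 'k \<Rightarrow> real" where
  "linf_dist u v = Max (range (\<lambda>j. \<bar>u $ j - v $ j\<bar>))"

definition couplings :: "(real ^ 'k::finite) measure \<Rightarrow> (real ^ 'k) measure
    \<Rightarrow> ((real ^ 'k) \<times> (real ^ 'k)) measure set" where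
  "couplings P Q = {\<pi>. prob_space \<pi> \<and> sets \<pi> = sets borel \<and>
      distr \<pi> borel fst = P \<and> distr \<pi> borel snd = Q}"

text \<open>W_infinity as defined in the paper: inf over couplings of the expected sup-norm cost.\<close>
definition W_inf :: "(real ^ 'k::finite) measure \<Rightarrow> (real ^ 'k) measure \<Rightarrow> ennreal" where
  "W_inf P Q = (INF \<pi>\<in>couplings P Q. \<integral>\<^sup>+ z. ennreal (linf_dist (fst z) (snd z)) \<partial>\<pi>)"

definition empirical :: "nat \<Rightarrow> (nat \<Rightarrow> real ^ 'k::finite) \<Rightarrow> (real ^ 'k) measure" where
  "empirical n g = distr (uniform_count_measure {..<n}) borel g"

end

theory Submission
  imports Defs
begin

lemma finite_range_k: "finite (range (h :: 'k::finite \<Rightarrow> 'b))"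
  by simp

lemma key:
  fixes c :: "real ^ 'k::finite"
  assumes "c \<in> prob_simplex" and "\<And>j. c $ j \<le> c $ m"
  shows "linf_dist c (onehot m) \<le> linf_dist c (onehot j)"
proof -
  have nn: "\<And>l. c $ l \<ge> 0" and s: "(\<Sum>l\<in>UNIV. c $ l) = 1"
    using assms(1) by (auto simp: prob_simplex_def)
  have le1: "\<And>l. c $ l \<le> 1"
  proof -
    fix l
    have "c $ l \<le> (\<Sum>l\<in>UNIV. c $ l)"
      by (rule member_le_sum) (auto simp: nn)
    then show "c $ l \<le> 1" using s by simp
  qed
  have ge: "\<bar>c $ l - onehot j $ l'\<bar> \<le> linf_dist c (onehot j)" if "l' = l" for l l'
    unfolding linf_dist_def using that by (intro Max_ge) auto
  show ?thesis
    unfolding linf_dist_def[of c "onehot m"]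
  proof (subst Max_le_iff, simp, simp, safe)
    fix l
    show "\<bar>c $ l - onehot m $ l\<bar> \<le> linf_dist c (onehot j)"
    proof (cases "l = m")
      case True
      have "\<bar>c $ l - onehot m $ l\<bar> = 1 - c $ m" using True le1[of m] by (simp add: onehot_def)
      also have "\<dots> \<le> \<bar>c $ j - onehot j $ j\<bar>" using assms(2)[of j] le1[of j] by (simp add: onehot_def)
      also have "\<dots> \<le> linf_dist c (onehot j)" by (rule ge) simp
      finally show ?thesis .
    next
      case False
      then have e: "\<bar>c $ l - onehot m $ l\<bar> = c $ l" using nn[of l] by (simp add: onehot_def)
      show ?thesis
      proof (cases "l = j")
        case True
        have "c $ l \<le> \<bar>c $ m - onehot j $ m\<bar>" using True False assms(2)[of j] nn[of m]
          by (simp add: onehot_def)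
        also have "\<dots> \<le> linf_dist c (onehot j)" by (rule ge) simp
        finally show ?thesis using e by simp
      next
        case False
        have "c $ l = \<bar>c $ l - onehot j $ l\<bar>" using False nn[of l] by (simp add: onehot_def)
        also have "\<dots> \<le> linf_dist c (onehot j)" by (rule ge) simp
        finally show ?thesis using e by simp
      qed
    qed
  qed
qed

lemma onehots_eq: "(onehots :: (real ^ 'k::finite) set) = range onehot"
proof safe
  fix y :: "real ^ 'k"
  assume y: "y \<in> onehots"
  have b: "\<And>l. y $ l \<in> {0,1}" and s: "(\<Sum>l\<in>UNIV. y $ l) = 1"
    using y by (auto simp: onehots_def prob_simplex_def)
  have nnb: "\<And>l. 0 \<le> y $ l" using b by (metis empty_iff insert_iff order_refl zero_le_one)
  obtain j where j: "y $ j \<noteq> 0"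
  proof (rule ccontr)
    assume "\<not> thesis"
    then have "\<And>l. y $ l = 0" using that by blast
    then show False using s by simp
  qed
  then have j1: "y $ j = 1" using b[of j] by auto
  have "y $ l = 0" if "l \<noteq> j" for l
  proof (rule ccontr)
    assume "y $ l \<noteq> 0"
    then have "y $ l = 1" using b[of l] by auto
    have "(\<Sum>l\<in>{j,l}. y $ l) \<le> (\<Sum>l\<in>UNIV. y $ l)"
      by (rule sum_mono2) (use nnb in auto)
    then show False using that j1 \<open>y $ l = 1\<close> s by simp
  qed
  then have "y = onehot j" using j1 by (auto simp: onehot_def vec_eq_iff)
  then show "y \<in> range onehot" by simp
next
  fix j :: 'k
  have "(\<Sum>l\<in>UNIV. onehot j $ l) = (1::real)"
    by (simp add: onehot_def)
  then show "onehot j \<in> onehots"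
    by (auto simp: onehots_def prob_simplex_def onehot_def)
qed

lemma cost_meas: "(\<lambda>z. linf_dist (fst z) (snd z :: real ^ 'k::finite)) \<in> borel_measurable borel"
  unfolding linf_dist_def
  by (intro borel_measurable_Max borel_measurable_continuous_onI) (auto intro!: continuous_intros)

lemma g_meas: "(\<lambda>u. Min (range (\<lambda>j. linf_dist u (onehot j :: real ^ 'k::finite)))) \<in> borel_measurable borel"
  unfolding linf_dist_def by (intro borel_measurable_Min borel_measurable_Max) auto


lemma meas_U: "h \<in> measurable (uniform_count_measure {..<(n::nat)}) (borel :: 'b::topological_space measure)"
  by (simp add: measurable_def space_uniform_count_measure sets_uniform_count_measure)

lemma fst_b: "fst \<in> borel_measurable (borel :: ('b::topological_space \<times> 'c::topological_space) measure)"
  by (rule borel_measurable_continuous_onI) (intro continuous_intros)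

lemma snd_b: "snd \<in> borel_measurable (borel :: ('b::topological_space \<times> 'c::topological_space) measure)"
  by (rule borel_measurable_continuous_onI) (intro continuous_intros)

theorem mainTheorem2:
  fixes f :: "'a \<Rightarrow> real ^ 'k::finite"
    and x :: "nat \<Rightarrow> 'a"
    and n :: nat
    and lab :: "nat \<Rightarrow> 'k"
    and P' :: "(real ^ 'k) measure"
  assumes f_simplex: "\<And>z. f z \<in> prob_simplex"
    and n_pos: "n > 0"
    and lab_argmax: "\<And>i j. i < n \<Longrightarrow> f (x i) $ j \<le> f (x i) $ lab i"
    and P'_prob: "prob_space P'"
    and P'_borel: "sets P' = sets borel"
    and P'_supp: "emeasure P' onehots = 1"
  shows "W_inf (empirical n (\<lambda>i. f (x i))) P'
           \<ge> W_inf (empirical n (\<lambda>i. f (x i))) (empirical n (\<lambda>i. onehot (lab i)))"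
proof -
  define U where "U = uniform_count_measure {..<n}"
  define E where "E = empirical n (\<lambda>i. f (x i))"
  define Q where "Q = empirical n (\<lambda>i. onehot (lab i))"
  define cost where "cost = (\<lambda>z::(real^'k) \<times> (real^'k). ennreal (linf_dist (fst z) (snd z)))"
  define g where "g = (\<lambda>u::real^'k. Min (range (\<lambda>j. linf_dist u (onehot j))))"
  define h where "h = (\<lambda>i. (f (x i), onehot (lab i)))"
  define \<pi>' where "\<pi>' = distr U borel h"
  have hm: "h \<in> measurable U borel" unfolding U_def by (rule meas_U)
  have costm: "cost \<in> borel_measurable borel" unfolding cost_def using cost_meas by measurable
  have gm: "(\<lambda>u. ennreal (g u)) \<in> borel_measurable borel" unfolding g_def using g_meas by measurable
  have Upr: "prob_space U" unfolding U_def by (rule prob_space_uniform_count_measure) (use n_pos in auto)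
  have EU: "E = distr U borel (\<lambda>i. f (x i))" unfolding E_def empirical_def U_def ..
  have QU: "Q = distr U borel (\<lambda>i. onehot (lab i))" unfolding Q_def empirical_def U_def ..
  have coup: "\<pi>' \<in> couplings E Q"
    unfolding couplings_def \<pi>'_def
  proof safe
    show "prob_space (distr U borel h)" by (rule prob_space.prob_space_distr[OF Upr hm])
    show "distr (distr U borel h) borel fst = E"
      by (subst distr_distr[OF fst_b hm]) (auto simp: EU h_def o_def)
    show "distr (distr U borel h) borel snd = Q"
      by (subst distr_distr[OF snd_b hm]) (auto simp: QU h_def o_def)
  qed auto
  have gval: "g (f (x i)) = linf_dist (f (x i)) (onehot (lab i))" if "i < n" for i
    unfolding g_def
  proof (rule antisym)
    show "Min (range (\<lambda>j. linf_dist (f (x i)) (onehot j))) \<le> linf_dist (f (x i)) (onehot (lab i))"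
      by (rule Min_le) auto
    show "linf_dist (f (x i)) (onehot (lab i)) \<le> Min (range (\<lambda>j. linf_dist (f (x i)) (onehot j)))"
      by (subst Min_ge_iff) (auto intro!: key f_simplex lab_argmax that)
  qed
  have c1: "(\<integral>\<^sup>+ z. cost z \<partial>\<pi>') = (\<integral>\<^sup>+ u. ennreal (g u) \<partial>E)"
  proof -
    have "(\<integral>\<^sup>+ z. cost z \<partial>\<pi>') = (\<integral>\<^sup>+ i. cost (h i) \<partial>U)"
      unfolding \<pi>'_def by (rule nn_integral_distr[OF hm]) (simp add: costm)
    also have "\<dots> = (\<integral>\<^sup>+ i. ennreal (g (f (x i))) \<partial>U)"
      by (rule nn_integral_cong) (auto simp: U_def space_uniform_count_measure cost_def h_def gval)
    also have "\<dots> = (\<integral>\<^sup>+ u. ennreal (g u) \<partial>E)"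
      unfolding EU by (rule nn_integral_distr[symmetric]) (auto simp: U_def gm intro: meas_U)
    finally show ?thesis .
  qed
  have main: "(\<integral>\<^sup>+ z. cost z \<partial>\<pi>') \<le> (\<integral>\<^sup>+ z. cost z \<partial>\<pi>)" if pc: "\<pi> \<in> couplings E P'" for \<pi>
  proof -
    have ps: "sets \<pi> = sets borel" and m1: "distr \<pi> borel fst = E" and m2: "distr \<pi> borel snd = P'"
      using pc by (auto simp: couplings_def)
    have fm: "fst \<in> measurable \<pi> (borel :: (real^'k) measure)"
    proof -
      have "fst \<in> borel_measurable (borel :: ((real^'k) \<times> (real^'k)) measure)"
        by (rule borel_measurable_continuous_onI) (intro continuous_intros)
      then show ?thesis using measurable_cong_sets[OF ps refl, where N="borel :: (real^'k) measure"] by simp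
    qed
    have sm: "snd \<in> measurable \<pi> (borel :: (real^'k) measure)"
    proof -
      have "snd \<in> borel_measurable (borel :: ((real^'k) \<times> (real^'k)) measure)"
        by (rule borel_measurable_continuous_onI) (intro continuous_intros)
      then show ?thesis using measurable_cong_sets[OF ps refl, where N="borel :: (real^'k) measure"] by simp
    qed
    have ob: "onehots \<in> sets (borel :: (real^'k) measure)"
      unfolding onehots_eq by (rule borel_closed) (rule finite_imp_closed; simp)
    have "AE y in P'. y \<in> onehots"
      using prob_space.AE_in_set_eq_1[OF P'_prob, of onehots] ob P'_borel P'_supp
      by (simp add: measure_def)
    then have "AE z in \<pi>. snd z \<in> onehots"
      unfolding m2[symmetric] by (subst (asm) AE_distr_iff[OF sm]) (use ob in auto)
    then have ae: "AE z in \<pi>. ennreal (g (fst z)) \<le> cost z"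
    proof eventually_elim
      case (elim z)
      then obtain j where "snd z = onehot j" unfolding onehots_eq by auto
      then show ?case unfolding cost_def g_def by (intro ennreal_leI Min_le) auto
    qed
    have "(\<integral>\<^sup>+ u. ennreal (g u) \<partial>E) = (\<integral>\<^sup>+ z. ennreal (g (fst z)) \<partial>\<pi>)"
      unfolding m1[symmetric] by (rule nn_integral_distr[OF fm]) (simp add: gm)
    also have "\<dots> \<le> (\<integral>\<^sup>+ z. cost z \<partial>\<pi>)" by (rule nn_integral_mono_AE[OF ae])
    finally show ?thesis using c1 by simp
  qed
  have "W_inf E Q \<le> (\<integral>\<^sup>+ z. cost z \<partial>\<pi>')"
    unfolding W_inf_def cost_def by (rule INF_lower) (use coup in simp)
  also have "\<dots> \<le> W_inf E P'"
    unfolding W_inf_def by (rule INF_greatest) (use main in \<open>simp add: cost_def\<close>)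
  finally show ?thesis unfolding E_def Q_def .
qed

end
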